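(* Let $\{X_t,Z_t\}$ be a mean-zero jointly stationary bivariate time series with residual spectral density $f=f_{X|Z}=f_X-f_{XZ}f_{ZX}/f_Z$. Let $h$ be a spectral density and consider the privacy mechanism $\Psi_h(e^{-i\lambda})=\exp\{i\pi\tilde R(H(\lambda))\}$, where $\tilde R(x)=\mathrm{sgn}(x)R(|x|)$, $R\in\mathcal{R}$, and $H(\lambda)=\int_0^\lambda\tilde h(\omega)d\omega$ with $\tilde h=h/\langle h\rangle_\pi$. Assume in addition that $R\in\mathcal{R}_L$, i.e. $R$ is Lipschitz with constant $L_R>0$. For $0\le\delta<1$ let $$\mathcal{F}_R(f,\delta)=\Big\{h:[0,\pi]\to[0,\infty):\ \langle h\rangle_\pi=\langle f\rangle_\pi,\ \sup_{0\le\lambda\le\pi}|h(\lambda)-f(\lambda)|\le\frac{\sqrt{\delta}\,\langle f\rangle_\pi}{L_R\pi^2}\Big\}.$$ Then $\Psi_h$ is $\delta$-LIP (for $f$) if $h\in\mathcal{F}_R(f,\delta)$.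
   Context: $z=e^{-i\lambda}$; spectral densities are even functions on $[-\pi,\pi]$. Notation: $\langle u,f\rangle=(2\pi)^{-1}\int_{-\pi}^{\pi}u(\lambda)f(\lambda)d\lambda$, $\langle f\rangle=\langle1,f\rangle$, $\langle f\rangle_\pi=\pi^{-1}\int_0^\pi f(\lambda)d\lambda$. Classes: $\mathcal{R}=\{R:[0,1]\to[0,1]:R(0)=0,\ R(x)+R(1-x)=1\ \forall x\in[0,1]\}$ and $\mathcal{R}_L=\{R\in\mathcal{R}: |R(x)-R(y)|\le L_R|x-y|\ \forall x,y\in[0,1]\}$ for some $L_R>0$. The Linear Incremental Privacy of a linear filter $\Psi$ is $\mathrm{LIP}(\Psi,f)=1-\langle\Psi,f\rangle^2/(\langle\Psi\overline\Psi,f\rangle\langle f\rangle)$, with $\Psi$ evaluated at $e^{-i\lambda}$ and $\overline{\Psi(e^{-i\lambda})}=\Psi(e^{i\lambda})$; for an all-pass filter ($|\Psi(e^{-i\lambda})|=1$) it equals $1-\langle\Psi,f\rangle^2/\langle f\rangle^2$. A mechanism $\Psi$ is $\delta$-LIP for $f$ (with $0\le\delta<1$) if $\mathrm{LIP}(\Psi,f)\ge1-\delta$. *)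

theory Defs
  imports "HOL-Analysis.Analysis"
begin

definition sp_inner :: "(real \<Rightarrow> complex) \<Rightarrow> (real \<Rightarrow> real) \<Rightarrow> complex" where
  "sp_inner u f = integral {-pi..pi} (\<lambda>l. u l * complex_of_real (f l)) / complex_of_real (2 * pi)"

definition sp_mean :: "(real \<Rightarrow> real) \<Rightarrow> complex" where
  "sp_mean f = sp_inner (\<lambda>_. 1) f"

definition mean_pi :: "(real \<Rightarrow> real) \<Rightarrow> real" where
  "mean_pi f = integral {0..pi} f / pi"

text \<open>Linear Incremental Privacy; the filter Psi is given as a function of lambda,
  Psi l = Psi(e^{-i l}), so that conj(Psi(e^{-i l})) = cnj (Psi l).\<close>
definition LIP :: "(real \<Rightarrow> complex) \<Rightarrow> (real \<Rightarrow> real) \<Rightarrow> complex" where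
  "LIP Psi f = 1 - (sp_inner Psi f)\<^sup>2 /
      (sp_inner (\<lambda>l. Psi l * cnj (Psi l)) f * sp_mean f)"

definition delta_LIP :: "(real \<Rightarrow> complex) \<Rightarrow> (real \<Rightarrow> real) \<Rightarrow> real \<Rightarrow> bool" where
  "delta_LIP Psi f \<delta> \<longleftrightarrow> LIP Psi f \<in> \<real> \<and> Re (LIP Psi f) \<ge> 1 - \<delta>"

definition class_R :: "(real \<Rightarrow> real) \<Rightarrow> bool" where
  "class_R R \<longleftrightarrow> (\<forall>x\<in>{0..1}. R x \<in> {0..1}) \<and> R 0 = 0 \<and>
                 (\<forall>x\<in>{0..1}. R x + R (1 - x) = 1)"

definition class_R_L :: "(real \<Rightarrow> real) \<Rightarrow> real \<Rightarrow> bool" where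
  "class_R_L R L \<longleftrightarrow> class_R R \<and> L > 0 \<and>
                 (\<forall>x\<in>{0..1}. \<forall>y\<in>{0..1}. \<bar>R x - R y\<bar> \<le> L * \<bar>x - y\<bar>)"

definition R_tilde :: "(real \<Rightarrow> real) \<Rightarrow> real \<Rightarrow> real" where
  "R_tilde R x = sgn x * R \<bar>x\<bar>"

text \<open>Normalised cumulative spectral function of h (h given on [0,pi], extended evenly):
  H(l) = sgn(l) * int_0^{|l|} h / int_0^pi h, so that H(pi) = 1.\<close>
definition H_cum :: "(real \<Rightarrow> real) \<Rightarrow> real \<Rightarrow> real" where
  "H_cum h l = sgn l * (integral {0..\<bar>l\<bar>} h / (pi * mean_pi h))"

definition Psi_mech :: "(real \<Rightarrow> real) \<Rightarrow> (real \<Rightarrow> real) \<Rightarrow> real \<Rightarrow> complex" where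
  "Psi_mech R h l = cis (pi * R_tilde R (H_cum h l))"

definition F_R :: "real \<Rightarrow> (real \<Rightarrow> real) \<Rightarrow> real \<Rightarrow> (real \<Rightarrow> real) set" where
  "F_R L f \<delta> = {h. (\<forall>l\<in>{0..pi}. h l \<ge> 0) \<and> mean_pi h = mean_pi f \<and>
      (\<forall>l\<in>{0..pi}. \<bar>h l - f l\<bar> \<le> sqrt \<delta> * mean_pi f / (L * pi\<^sup>2))}"

end

theory Submission
  imports Defs
begin

lemma int_reflect_zero:
  fixes k :: "real \<Rightarrow> real"
  assumes ks: "\<forall>u\<in>{0..1}. k (1-u) = - k u"
  shows "integral {0..1} k = 0"
proof -
  have "integral {0..1} (\<lambda>u. k (1-u)) = integral {-1..-0} (\<lambda>x. (\<lambda>u. k (1-u)) (-x))"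
    using Henstock_Kurzweil_Integration.integral_reflect_real[of 1 0 "\<lambda>u. k (1-u)"] by (simp only:)
  also have "\<dots> = integral {-1..0} (k \<circ> (+) 1)"
    by (rule arg_cong2[where f=integral]) (auto simp: o_def)
  also have "\<dots> = integral {0..1} k" by (simp add: integral_shift_Icc_real)
  finally have e1: "integral {0..1} (\<lambda>u. k (1-u)) = integral {0..1} k" .
  have "integral {0..1} (\<lambda>u. k (1-u)) = integral {0..1} (\<lambda>u. - k u)"
    by (rule integral_cong) (use ks in auto)
  also have "\<dots> = - integral {0..1} k" by (simp add: integral_neg)
  finally show ?thesis using e1 by simp
qed

lemma cont_mult_integrable:
  fixes g f :: "real \<Rightarrow> real"
  assumes "continuous_on {a..b} g" "f integrable_on {a..b}" "\<forall>x\<in>{a..b}. f x \<ge> 0"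
  shows "(\<lambda>x. g x * f x) integrable_on {a..b}"
proof -
  have "(\<lambda>x. g x * f x) absolutely_integrable_on {a..b}"
  proof (rule absolutely_integrable_bounded_measurable_product_real)
    show "g \<in> borel_measurable (lebesgue_on {a..b})"
      by (rule continuous_imp_measurable_on_sets_lebesgue) (use assms in auto)
    show "bounded (g ` {a..b})"
      by (rule compact_imp_bounded, rule compact_continuous_image) (use assms in auto)
    show "f absolutely_integrable_on {a..b}"
      by (rule nonnegative_absolutely_integrable_1) (use assms in auto)
  qed auto
  then show ?thesis using absolutely_integrable_on_def by blast
qed

lemma small_zero:
  fixes x :: real
  assumes "\<And>e. e > 0 \<Longrightarrow> \<bar>x\<bar> \<le> e"
  shows "x = 0"
proof (rule ccontr)
  assume "x \<noteq> 0"
  then have "\<bar>x\<bar> \<le> \<bar>x\<bar>/2" using assms[of "\<bar>x\<bar>/2"] by auto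
  then show False using \<open>x \<noteq> 0\<close> by auto
qed

lemma chain_zero:
  fixes h k :: "real \<Rightarrow> real" and a A :: real
  assumes hi: "h integrable_on {0..a}" and hn: "\<forall>t\<in>{0..a}. h t \<ge> 0"
    and A: "A = integral {0..a} h" "A > 0"
    and kc: "continuous_on {0..1} k" and ks: "\<forall>u\<in>{0..1}. k (1-u) = - k u"
  shows "integral {0..a} (\<lambda>t. k (integral {0..t} h / A) * h t) = 0"
proof -
  define H where "H t = integral {0..t} h / A" for t
  have a0: "a > 0"
  proof (rule ccontr)
    assume "\<not> a > 0"
    then have "integral {0..a} h = 0"
      by (cases "a = 0") auto
    then show False using A by simp
  qed
  have hsub: "h integrable_on {x..y}" if "0 \<le> x" "y \<le> a" for x y
    by (rule integrable_subinterval_real[OF hi]) (use that in auto)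
  have Hc: "continuous_on {0..a} H"
    unfolding H_def by (intro continuous_intros indefinite_integral_continuous_1 hi) (use A in auto)
  have HD: "integral {x..y} h = A * (H y - H x)" if "0 \<le> x" "x \<le> y" "y \<le> a" for x y
  proof -
    have "integral {0..x} h + integral {x..y} h = integral {0..y} h"
      by (rule Henstock_Kurzweil_Integration.integral_combine) (use that hsub in auto)
    then show ?thesis unfolding H_def using A(2) by (simp add: field_simps flip: distrib_left)
  qed
  have Hmono: "H x \<le> H y" if "0 \<le> x" "x \<le> y" "y \<le> a" for x y
  proof -
    have "0 \<le> integral {x..y} h"
      by (rule integral_nonneg) (use that hsub hn in auto)
    then show ?thesis using HD[OF that] A by (simp add: zero_le_mult_iff)
  qed
  have H0: "H 0 = 0" unfolding H_def by simp
  have Ha: "H a = 1" unfolding H_def using A by simp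
  have Hr: "H t \<in> {0..1}" if "t \<in> {0..a}" for t
    using Hmono[of 0 t] Hmono[of t a] that H0 Ha by auto
  have kHc: "continuous_on {0..a} (\<lambda>t. k (H t))"
    by (rule continuous_on_compose2[OF kc Hc]) (use Hr in auto)
  define g where "g t = k (H t) * h t" for t
  have gi: "g integrable_on {0..a}"
    unfolding g_def by (rule cont_mult_integrable[OF kHc hi hn])
  have gsub: "g integrable_on {x..y}" if "0 \<le> x" "y \<le> a" for x y
    by (rule integrable_subinterval_real[OF gi]) (use that in auto)
  have ksub: "k integrable_on {x..y}" if "0 \<le> x" "y \<le> 1" for x y
    by (rule integrable_continuous_interval, rule continuous_on_subset[OF kc]) (use that in auto)
  define F where "F x = integral {0..x} g - A * integral {0..H x} k" for x
  have Fdiff: "F y - F x = integral {x..y} g - A * integral {H x..H y} k"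
    if "0 \<le> x" "x \<le> y" "y \<le> a" for x y
  proof -
    have e1: "integral {0..x} g + integral {x..y} g = integral {0..y} g"
      by (rule Henstock_Kurzweil_Integration.integral_combine) (use that gsub in auto)
    have e2: "integral {0..H x} k + integral {H x..H y} k = integral {0..H y} k"
      by (rule Henstock_Kurzweil_Integration.integral_combine)
         (use that ksub Hmono[OF that] Hr[of x] Hr[of y] in auto)
    show ?thesis unfolding F_def e1[symmetric] e2[symmetric] by (simp add: algebra_simps)
  qed
  have bound: "\<bar>F a - F 0\<bar> \<le> 2 * e * A" if e: "e > 0" for e
  proof -
    have "uniformly_continuous_on {0..1} k"
      by (rule compact_uniformly_continuous[OF kc]) simp
    then obtain d where d: "d > 0" "\<And>u v. u \<in> {0..1} \<Longrightarrow> v \<in> {0..1} \<Longrightarrow> dist v u < d \<Longrightarrow> dist (k v) (k u) < e"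
      unfolding uniformly_continuous_on_def using e by metis
    have "uniformly_continuous_on {0..a} H"
      by (rule compact_uniformly_continuous[OF Hc]) simp
    then obtain \<eta> where eta: "\<eta> > 0" "\<And>x y. x \<in> {0..a} \<Longrightarrow> y \<in> {0..a} \<Longrightarrow> dist y x < \<eta> \<Longrightarrow> dist (H y) (H x) < d"
      unfolding uniformly_continuous_on_def using d(1) by metis
    have piece: "\<bar>F y - F x\<bar> \<le> 2 * e * A * (H y - H x)"
      if xy: "0 \<le> x" "x \<le> y" "y \<le> a" "y - x < \<eta>" for x y
    proof -
      have dH: "H y - H x < d" using eta(2)[of x y] xy by (auto simp: dist_real_def)
      have Hxy: "H x \<le> H y" by (rule Hmono[OF xy(1-3)])
      have E1: "\<bar>integral {x..y} (\<lambda>t. (k (H t) - k (H x)) * h t)\<bar> \<le> integral {x..y} (\<lambda>t. e * h t)"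
      proof -
        have "norm (integral {x..y} (\<lambda>t. (k (H t) - k (H x)) * h t)) \<le> integral {x..y} (\<lambda>t. e * h t)"
        proof (rule integral_norm_bound_integral)
          show "(\<lambda>t. (k (H t) - k (H x)) * h t) integrable_on {x..y}"
            by (rule cont_mult_integrable, intro continuous_intros continuous_on_subset[OF kHc])
               (use xy hsub hn in auto)
          show "(\<lambda>t. e * h t) integrable_on {x..y}"
            using integrable_on_cmult_left[OF hsub[of x y], of e] xy by simp
          fix t assume t: "t \<in> {x..y}"
          have "H x \<le> H t" "H t \<le> H y" using Hmono[of x t] Hmono[of t y] xy t by auto
          then have "dist (k (H t)) (k (H x)) < e"
            using d(2)[of "H x" "H t"] Hr[of x] Hr[of t] xy t dH by (auto simp: dist_real_def)
          moreover have "h t \<ge> 0" using hn xy t by auto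
          ultimately show "norm ((k (H t) - k (H x)) * h t) \<le> e * h t"
            by (auto simp: dist_real_def abs_mult intro: mult_right_mono)
        qed
        then show ?thesis by simp
      qed
      have E1': "integral {x..y} (\<lambda>t. e * h t) = e * (A * (H y - H x))"
        using HD[OF xy(1-3)] by simp
      have E2: "\<bar>integral {H x..H y} (\<lambda>u. k u - k (H x))\<bar> \<le> integral {H x..H y} (\<lambda>u. e)"
      proof -
        have "norm (integral {H x..H y} (\<lambda>u. k u - k (H x))) \<le> integral {H x..H y} (\<lambda>u. e)"
        proof (rule integral_norm_bound_integral)
          show "(\<lambda>u. k u - k (H x)) integrable_on {H x..H y}"
            by (intro integrable_diff ksub) (use Hr[of x] Hr[of y] xy in auto)
          fix u assume u: "u \<in> {H x..H y}"
          then have "dist (k u) (k (H x)) < e"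
            using d(2)[of "H x" u] Hr[of x] Hr[of y] xy dH by (auto simp: dist_real_def)
          then show "norm (k u - k (H x)) \<le> e" by (simp add: dist_real_def)
        qed auto
        then show ?thesis by simp
      qed
      have E2': "integral {H x..H y} (\<lambda>u. e) = e * (H y - H x)" using Hxy by simp
      have S1: "integral {x..y} g = k (H x) * integral {x..y} h + integral {x..y} (\<lambda>t. (k (H t) - k (H x)) * h t)"
      proof -
        have "integral {x..y} g = integral {x..y} (\<lambda>t. k (H x) * h t + (k (H t) - k (H x)) * h t)"
          unfolding g_def by (rule integral_cong) (simp add: algebra_simps)
        also have "\<dots> = integral {x..y} (\<lambda>t. k (H x) * h t) + integral {x..y} (\<lambda>t. (k (H t) - k (H x)) * h t)"
        proof (rule integral_add)
          show "(\<lambda>t. k (H x) * h t) integrable_on {x..y}"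
            using integrable_on_cmult_left[OF hsub[of x y], of "k (H x)"] xy by simp
          show "(\<lambda>t. (k (H t) - k (H x)) * h t) integrable_on {x..y}"
            by (rule cont_mult_integrable, intro continuous_intros continuous_on_subset[OF kHc])
               (use xy hsub hn in auto)
        qed
        finally show ?thesis by simp
      qed
      have S2: "integral {H x..H y} k = k (H x) * (H y - H x) + integral {H x..H y} (\<lambda>u. k u - k (H x))"
      proof -
        have "integral {H x..H y} (\<lambda>u. k u - k (H x)) = integral {H x..H y} k - integral {H x..H y} (\<lambda>u. k (H x))"
          by (rule integral_diff) (use ksub Hr[of x] Hr[of y] xy in auto)
        then show ?thesis using Hxy by (simp add: algebra_simps)
      qed
      have "F y - F x = integral {x..y} (\<lambda>t. (k (H t) - k (H x)) * h t) - A * integral {H x..H y} (\<lambda>u. k u - k (H x))"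
        using Fdiff[OF xy(1-3)] S1 S2 HD[OF xy(1-3)] by (simp add: algebra_simps)
      then have "\<bar>F y - F x\<bar> \<le> \<bar>integral {x..y} (\<lambda>t. (k (H t) - k (H x)) * h t)\<bar> + A * \<bar>integral {H x..H y} (\<lambda>u. k u - k (H x))\<bar>"
        using A(2) abs_triangle_ineq4[of "integral {x..y} (\<lambda>t. (k (H t) - k (H x)) * h t)" "A * integral {H x..H y} (\<lambda>u. k u - k (H x))"] by (simp add: abs_mult)
      also have "\<dots> \<le> e * (A * (H y - H x)) + A * (e * (H y - H x))"
        using E1 E1' E2 E2' A(2) by (intro add_mono mult_left_mono) (auto simp: mult.commute)
      finally show ?thesis by (simp add: algebra_simps)
    qed
    obtain n :: nat where n: "a / \<eta> < real n" using reals_Archimedean2 by blast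
    have npos: "n > 0" using n a0 eta(1) by (cases n) (auto simp: divide_less_0_iff)
    define x where "x i = a * real i / real n" for i
    have step: "x (Suc i) - x i < \<eta>" for i
    proof -
      have "x (Suc i) - x i = a / real n" unfolding x_def by (simp add: add_divide_distrib distrib_left)
      also have "\<dots> < \<eta>" using n npos eta(1) a0 by (simp add: field_simps)
      finally show ?thesis .
    qed
    have xr: "0 \<le> x i \<and> x i \<le> x (Suc i) \<and> x (Suc i) \<le> a" if "i < n" for i
    proof -
      have "real (Suc i) \<le> real n" using that by simp
      then have "a * real (Suc i) \<le> a * real n" using a0 by (intro mult_left_mono) auto
      then show ?thesis using that a0 npos unfolding x_def by (auto simp: field_simps)
    qed
    have "F a - F 0 = (\<Sum>i<n. F (x (Suc i)) - F (x i))"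
      by (subst sum_lessThan_telescope) (use npos in \<open>simp add: x_def\<close>)
    then have "\<bar>F a - F 0\<bar> \<le> (\<Sum>i<n. \<bar>F (x (Suc i)) - F (x i)\<bar>)"
      by (simp add: sum_abs)
    also have "\<dots> \<le> (\<Sum>i<n. 2 * e * A * (H (x (Suc i)) - H (x i)))"
      by (rule sum_mono) (use piece xr step in auto)
    also have "\<dots> = 2 * e * A * (\<Sum>i<n. H (x (Suc i)) - H (x i))"
      by (simp add: sum_distrib_left)
    also have "\<dots> = 2 * e * A"
      by (subst sum_lessThan_telescope) (use npos H0 Ha in \<open>simp add: x_def\<close>)
    finally show ?thesis .
  qed
  have "F a - F 0 = 0"
  proof (rule small_zero)
    fix e :: real assume "e > 0"
    then show "\<bar>F a - F 0\<bar> \<le> e" using bound[of "e / (2 * A)"] A(2) by simp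
  qed
  moreover have "F 0 = 0" unfolding F_def using H0 by simp
  moreover have "F a = integral {0..a} g" unfolding F_def using Ha int_reflect_zero[OF ks] by simp
  ultimately show ?thesis unfolding g_def H_def by simp
qed

lemma cis_split: "cis a = complex_of_real (cos a) + \<i> * complex_of_real (sin a)"
  by (simp add: complex_eq_iff)

lemma cnj_cis_split: "cnj (cis a) = complex_of_real (cos a) - \<i> * complex_of_real (sin a)"
  by (simp add: complex_eq_iff)

lemma H_props:
  fixes h :: "real \<Rightarrow> real" and a A :: real
  assumes hi: "h integrable_on {0..a}" and hn: "\<forall>t\<in>{0..a}. h t \<ge> 0"
    and A: "A = integral {0..a} h" "A > 0"
  shows "continuous_on {0..a} (\<lambda>t. integral {0..t} h / A)"
    and "\<And>t. t \<in> {0..a} \<Longrightarrow> integral {0..t} h / A \<in> {0..1}"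
proof -
  show "continuous_on {0..a} (\<lambda>t. integral {0..t} h / A)"
    by (intro continuous_intros indefinite_integral_continuous_1 hi) (use A in auto)
  fix t assume t: "t \<in> {0..a}"
  have hsub: "h integrable_on {x..y}" if "0 \<le> x" "y \<le> a" for x y
    by (rule integrable_subinterval_real[OF hi]) (use that in auto)
  have e: "integral {0..t} h + integral {t..a} h = integral {0..a} h"
    by (rule Henstock_Kurzweil_Integration.integral_combine) (use t hi in auto)
  have "0 \<le> integral {0..t} h" by (rule integral_nonneg) (use t hsub hn in auto)
  moreover have "0 \<le> integral {t..a} h" by (rule integral_nonneg) (use t hsub hn in auto)
  ultimately show "integral {0..t} h / A \<in> {0..1}" using e A by auto
qed

theorem theorem2:
  fixes f h R :: "real \<Rightarrow> real" and L \<delta> :: real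
  assumes f_int: "f integrable_on {-pi..pi}"
    and f_nonneg: "\<forall>l\<in>{-pi..pi}. f l \<ge> 0"
    and f_even: "\<forall>l\<in>{-pi..pi}. f (-l) = f l"
    and R: "class_R_L R L"
    and \<delta>: "0 \<le> \<delta>" "\<delta> < 1"
    and h_int: "h integrable_on {0..pi}"
    and hF: "h \<in> F_R L f \<delta>"
  shows "delta_LIP (Psi_mech R h) f \<delta>"
proof -
  define m where "m = mean_pi f"
  define c0 where "c0 = sqrt \<delta> * m / (L * pi\<^sup>2)"
  have hn: "\<forall>l\<in>{0..pi}. h l \<ge> 0" and mh: "mean_pi h = m"
    and hf: "\<forall>l\<in>{0..pi}. \<bar>h l - f l\<bar> \<le> c0"
    using hF unfolding F_R_def m_def c0_def by auto
  have Rc: "class_R R" and L0: "L > 0" and RL: "\<forall>x\<in>{0..1}. \<forall>y\<in>{0..1}. \<bar>R x - R y\<bar> \<le> L * \<bar>x - y\<bar>"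
    using R unfolding class_R_L_def by auto
  have R0: "R 0 = 0" and Rs: "\<forall>x\<in>{0..1}. R x + R (1 - x) = 1" using Rc unfolding class_R_def by auto
  have L1: "L \<ge> 1"
  proof -
    have "R (1/2) = 1/2" using Rs[rule_format, of "1/2"] by simp
    then show ?thesis using RL[rule_format, of "1/2" 0] R0 by simp
  qed
  have fi0: "f integrable_on {0..pi}"
    by (rule integrable_subinterval_real[OF f_int]) auto
  have fn0: "\<forall>l\<in>{0..pi}. f l \<ge> 0" using f_nonneg by auto
  have intf: "integral {0..pi} f = pi * m" unfolding m_def mean_pi_def by simp
  have inth: "integral {0..pi} h = pi * m" using mh unfolding mean_pi_def by (simp add: field_simps)
  have m0: "m \<ge> 0" using integral_nonneg[OF fi0] fn0 intf pi_gt_zero by (simp add: zero_le_mult_iff)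
  have fneg: "(f has_integral (pi * m)) {-pi..0}"
  proof -
    have "((\<lambda>x. f (-x)) has_integral (pi * m)) {0..pi}"
    proof -
      have "(f has_integral (pi * m)) {0..pi}" using integrable_integral[OF fi0] intf by simp
      then show ?thesis by (rule has_integral_cong[THEN iffD2, rotated]) (use f_even in auto)
    qed
    then have "((\<lambda>x. (\<lambda>x. f (-x)) (-x)) has_integral (pi * m)) {-pi..-0}"
      by (rule Henstock_Kurzweil_Integration.has_integral_reflect_real[THEN iffD2])
    then show ?thesis by simp
  qed
  have fall: "(f has_integral (2 * pi * m)) {-pi..pi}"
  proof -
    have "(f has_integral (pi * m)) {0..pi}" using integrable_integral[OF fi0] intf by simp
    from has_integral_combine[OF _ _ fneg this] show ?thesis by (simp add: mult.assoc)
  qed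
  have mean_f: "sp_mean f = complex_of_real m"
  proof -
    have "((\<lambda>l. 1 * complex_of_real (f l)) has_integral complex_of_real (2 * pi * m)) {-pi..pi}"
      using has_integral_of_real[OF fall] by simp
    then have "integral {-pi..pi} (\<lambda>l. 1 * complex_of_real (f l)) = complex_of_real (2 * pi * m)"
      by (rule integral_unique)
    then show ?thesis unfolding sp_mean_def sp_inner_def by simp
  qed
  define P where "P = Psi_mech R h"
  have PP: "sp_inner (\<lambda>l. P l * cnj (P l)) f = sp_mean f"
  proof -
    have "(\<lambda>l. P l * cnj (P l)) = (\<lambda>_. 1)"
      by (rule ext) (simp add: P_def Psi_mech_def cis_cnj cis_mult)
    then show ?thesis unfolding sp_mean_def by simp
  qed
  show ?thesis
  proof (cases "m = 0")
    case True
    then have "LIP P f = 1" unfolding LIP_def using PP mean_f by simp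
    then show ?thesis using \<delta> unfolding delta_LIP_def P_def by simp
  next
    case False
    then have mpos: "m > 0" using m0 by simp
    define A where "A = pi * m"
    have Apos: "A > 0" using mpos by (simp add: A_def)
    define H where "H l = integral {0..l} h / A" for l
    have Hc: "continuous_on {0..pi} H" and Hr: "\<And>t. t \<in> {0..pi} \<Longrightarrow> H t \<in> {0..1}"
      using H_props[OF h_int hn _ Apos] inth unfolding H_def A_def by auto
    have Rcont: "continuous_on {0..1} R"
      unfolding continuous_on_iff
    proof (intro ballI allI impI)
      fix x e :: real assume x: "x \<in> {0..1}" and e: "e > 0"
      show "\<exists>d>0. \<forall>x'\<in>{0..1}. dist x' x < d \<longrightarrow> dist (R x') (R x) < e"
      proof (intro exI[of _ "e / L"] conjI ballI impI)
        show "e / L > 0" using e L0 by simp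
        fix y assume y: "y \<in> {0..1}" and "dist y x < e / L"
        then have "L * \<bar>y - x\<bar> < e" using L0 by (simp add: dist_real_def field_simps)
        then show "dist (R y) (R x) < e" using RL[rule_format, OF y x] by (simp add: dist_real_def)
      qed
    qed
    define k where "k u = cos (pi * R u)" for u
    define ss where "ss u = sin (pi * R u)" for u
    have kc: "continuous_on {0..1} k" unfolding k_def by (intro continuous_intros Rcont)
    have ssc: "continuous_on {0..1} ss" unfolding ss_def by (intro continuous_intros Rcont)
    have ks: "\<forall>u\<in>{0..1}. k (1-u) = - k u"
    proof
      fix u :: real assume "u \<in> {0..1}"
      then have "R (1 - u) = 1 - R u" using Rs by (auto simp: algebra_simps)
      then show "k (1-u) = - k u" unfolding k_def by (simp add: right_diff_distrib)
    qed
    have kH0: "integral {0..pi} (\<lambda>t. k (H t) * h t) = 0"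
      unfolding H_def by (rule chain_zero[OF h_int hn _ Apos kc ks]) (simp add: A_def inth)
    have kHc: "continuous_on {0..pi} (\<lambda>t. k (H t))"
      by (rule continuous_on_compose2[OF kc Hc]) (use Hr in auto)
    have sHc: "continuous_on {0..pi} (\<lambda>t. ss (H t))"
      by (rule continuous_on_compose2[OF ssc Hc]) (use Hr in auto)
    define J where "J = integral {0..pi} (\<lambda>l. k (H l) * f l)"
    define J2 where "J2 = integral {0..pi} (\<lambda>l. ss (H l) * f l)"
    have Ji: "((\<lambda>l. k (H l) * f l) has_integral J) {0..pi}"
      unfolding J_def by (rule integrable_integral, rule cont_mult_integrable[OF kHc fi0 fn0])
    have J2i: "((\<lambda>l. ss (H l) * f l) has_integral J2) {0..pi}"
      unfolding J2_def by (rule integrable_integral, rule cont_mult_integrable[OF sHc fi0 fn0])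
    have Ppos: "P l = cis (pi * R (H l))" if "l \<in> {0..pi}" for l
    proof -
      have "H_cum h l = H l"
      proof (cases "l = 0")
        case True then show ?thesis by (simp add: H_cum_def H_def)
      next
        case False then show ?thesis using that
          by (simp add: H_cum_def H_def A_def mh)
      qed
      moreover have "R_tilde R (H l) = R (H l)"
      proof (cases "H l = 0")
        case True then show ?thesis by (simp add: R_tilde_def R0)
      next
        case False then show ?thesis using Hr[OF that] by (simp add: R_tilde_def)
      qed
      ultimately show ?thesis unfolding P_def Psi_mech_def by simp
    qed
    have Pneg: "P (-l) = cnj (P l)" for l
      by (simp add: P_def Psi_mech_def cis_cnj H_cum_def R_tilde_def sgn_mult)
    have Ipos: "((\<lambda>l. P l * complex_of_real (f l)) has_integral
        (complex_of_real J + \<i> * complex_of_real J2)) {0..pi}"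
    proof -
      have "((\<lambda>l. complex_of_real (k (H l) * f l) + \<i> * complex_of_real (ss (H l) * f l)) has_integral
        (complex_of_real J + \<i> * complex_of_real J2)) {0..pi}"
        by (intro has_integral_add has_integral_mult_right has_integral_of_real Ji J2i)
      then show ?thesis
        by (rule has_integral_cong[THEN iffD1, rotated])
           (simp add: Ppos cis_split k_def ss_def algebra_simps)
    qed
    have Ineg: "((\<lambda>l. P l * complex_of_real (f l)) has_integral
        (complex_of_real J - \<i> * complex_of_real J2)) {-pi..0}"
    proof -
      have "((\<lambda>l. complex_of_real (k (H l) * f l) - \<i> * complex_of_real (ss (H l) * f l)) has_integral
        (complex_of_real J - \<i> * complex_of_real J2)) {0..pi}"
        by (intro has_integral_diff has_integral_mult_right has_integral_of_real Ji J2i)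
      then have "((\<lambda>l. P (-l) * complex_of_real (f (-l))) has_integral
        (complex_of_real J - \<i> * complex_of_real J2)) {0..pi}"
        by (rule has_integral_cong[THEN iffD1, rotated])
           (use f_even in \<open>simp add: Pneg Ppos cnj_cis_split k_def ss_def algebra_simps\<close>)
      then have "((\<lambda>x. (\<lambda>l. P (-l) * complex_of_real (f (-l))) (-x)) has_integral
        (complex_of_real J - \<i> * complex_of_real J2)) {-pi..-0}"
        by (rule Henstock_Kurzweil_Integration.has_integral_reflect_real[THEN iffD2])
      then show ?thesis by simp
    qed
    have "((\<lambda>l. P l * complex_of_real (f l)) has_integral (2 * complex_of_real J)) {-pi..pi}"
      using has_integral_combine[OF _ _ Ineg Ipos] by simp
    then have spP: "sp_inner P f = complex_of_real (J / pi)"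
      unfolding sp_inner_def by (simp add: integral_unique)
    have JJ: "J = integral {0..pi} (\<lambda>l. k (H l) * (f l - h l))"
    proof -
      have "integral {0..pi} (\<lambda>l. k (H l) * f l - k (H l) * h l) =
          integral {0..pi} (\<lambda>l. k (H l) * f l) - integral {0..pi} (\<lambda>l. k (H l) * h l)"
        by (rule integral_diff, rule cont_mult_integrable[OF kHc fi0 fn0],
            rule cont_mult_integrable[OF kHc h_int hn])
      then show ?thesis using kH0 by (simp add: J_def right_diff_distrib)
    qed
    have "\<bar>J\<bar> \<le> integral {0..pi} (\<lambda>l. c0)"
    proof -
      have "norm (integral {0..pi} (\<lambda>l. k (H l) * (f l - h l))) \<le> integral {0..pi} (\<lambda>l. c0)"
      proof (rule integral_norm_bound_integral)
        show "(\<lambda>l. k (H l) * (f l - h l)) integrable_on {0..pi}"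
          unfolding right_diff_distrib
          by (rule integrable_diff, rule cont_mult_integrable[OF kHc fi0 fn0],
            rule cont_mult_integrable[OF kHc h_int hn])
        fix l assume l: "l \<in> {0..pi}"
        have "\<bar>k (H l)\<bar> \<le> 1" unfolding k_def by simp
        moreover have "\<bar>f l - h l\<bar> \<le> c0" using hf l by (simp add: abs_minus_commute)
        ultimately have "\<bar>k (H l)\<bar> * \<bar>f l - h l\<bar> \<le> 1 * c0"
          by (intro mult_mono) auto
        then show "norm (k (H l) * (f l - h l)) \<le> c0"
          by (simp add: abs_mult)
      qed auto
      then show ?thesis using JJ by simp
    qed
    then have Jb: "\<bar>J\<bar> \<le> pi * c0" by simp
    have "pi * c0 \<le> pi * (sqrt \<delta> * m)"
    proof -
      have "L * pi\<^sup>2 \<ge> 1"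
      proof -
        have p1: "1 \<le> pi" using pi_gt3 by simp
        have "1 * 1 \<le> pi * pi" by (rule mult_mono) (use p1 in auto)
        then have p2: "1 \<le> pi\<^sup>2" by (simp add: power2_eq_square)
        have "1 * 1 \<le> L * pi\<^sup>2" by (rule mult_mono) (use p2 L1 in auto)
        then show ?thesis by simp
      qed
      then have "c0 \<le> sqrt \<delta> * m" unfolding c0_def using mpos \<delta>
        by (simp add: divide_le_eq) (use mult_left_mono[of 1 "L * pi\<^sup>2" "sqrt \<delta> * m"] in auto)
      then show ?thesis by simp
    qed
    then have "\<bar>J\<bar> \<le> pi * (sqrt \<delta> * m)" using Jb by linarith
    then have "\<bar>J / pi\<bar> \<le> sqrt \<delta> * m" by (simp add: divide_le_eq mult.commute)
    then have "\<bar>J / pi\<bar>\<^sup>2 \<le> (sqrt \<delta> * m)\<^sup>2" by (rule power_mono) auto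
    then have "(J / pi)\<^sup>2 \<le> (sqrt \<delta> * m)\<^sup>2" by (simp add: power_divide)
    then have sq: "(J / pi)\<^sup>2 \<le> \<delta> * m\<^sup>2" using \<delta> by (simp add: power_mult_distrib)
    have "LIP P f = complex_of_real (1 - (J / pi)\<^sup>2 / m\<^sup>2)"
      unfolding LIP_def PP spP mean_f by (simp add: power2_eq_square)
    moreover have "1 - (J / pi)\<^sup>2 / m\<^sup>2 \<ge> 1 - \<delta>" using sq mpos by (simp add: divide_le_eq)
    ultimately show ?thesis unfolding delta_LIP_def P_def by simp
  qed
qed

end
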